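(* Let $q$ be a prime power, $n\ge 1$, and $1\le k\le n(q-1)$. Then $C_{n,k}^q$ is self-dual (i.e. $C_{n,k}^q=(C_{n,k}^q)^\perp$) if and only if $q$ and $n$ are both odd and $k=\frac{n(q-1)}{2}$.
   Context: For a prime power $q$ and integers $n\ge 1$, $k\ge 0$, the projective Reed-Muller code $C_{n,k}^q\subseteq \mathbb{F}_q^N$, $N=\frac{q^{n+1}-1}{q-1}$, is defined as follows. For each point of $\mathbb{P}^n(\mathbb{F}_q)$ choose the affine representative $(p_0,\dots,p_n)\in\mathbb{F}_q^{n+1}\setminus\{0\}$ whose left-most nonzero coordinate equals $1$, and fix an ordering $P_1',\dots,P_N'$ of these representatives. Then $C_{n,k}^q=\{(F(P_1'),\dots,F(P_N')) : F\in \mathbb{F}_q[x_0,\dots,x_n]_k\}$, where $\mathbb{F}_q[x_0,\dots,x_n]_k$ is the space of homogeneous polynomials of degree $k$ together with $0$. Duals are taken with respect to the standard dot product on $\mathbb{F}_q^N$. *)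

theory Defs
  imports Main
begin

definition hom_monos :: "nat \<Rightarrow> nat \<Rightarrow> (nat \<Rightarrow> nat) set" where
  "hom_monos n k = {e. (\<forall>i>n. e i = 0) \<and> (\<Sum>i\<le>n. e i) = k}"

definition hom_eval :: "nat \<Rightarrow> nat \<Rightarrow> ((nat \<Rightarrow> nat) \<Rightarrow> 'a::field) \<Rightarrow> (nat \<Rightarrow> 'a) \<Rightarrow> 'a" where
  "hom_eval n k c x = (\<Sum>e\<in>hom_monos n k. c e * (\<Prod>i\<le>n. x i ^ e i))"

(* Normalized representatives of points of P^n(F_q): left-most nonzero coordinate is 1. *)
definition proj_points :: "nat \<Rightarrow> (nat \<Rightarrow> 'a::field) set" where
  "proj_points n = {p. (\<forall>i>n. p i = 0) \<and> (\<exists>j\<le>n. p j = 1 \<and> (\<forall>i<j. p i = 0))}"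

(* Ambient space F_q^N: functions on the point set (zero outside). *)
definition ambient :: "nat \<Rightarrow> ((nat \<Rightarrow> 'a::field) \<Rightarrow> 'a) set" where
  "ambient n = {v. \<forall>P. P \<notin> proj_points n \<longrightarrow> v P = 0}"

definition proj_RM :: "nat \<Rightarrow> nat \<Rightarrow> ((nat \<Rightarrow> 'a::field) \<Rightarrow> 'a) set" where
  "proj_RM n k = (\<lambda>c. \<lambda>P. if P \<in> proj_points n then hom_eval n k c P else 0) ` UNIV"

definition dot :: "nat \<Rightarrow> ((nat \<Rightarrow> 'a::field) \<Rightarrow> 'a) \<Rightarrow> ((nat \<Rightarrow> 'a) \<Rightarrow> 'a) \<Rightarrow> 'a" where
  "dot n u v = (\<Sum>P\<in>proj_points n. u P * v P)"

definition dual_code :: "nat \<Rightarrow> ((nat \<Rightarrow> 'a::field) \<Rightarrow> 'a) set \<Rightarrow> ((nat \<Rightarrow> 'a) \<Rightarrow> 'a) set" where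
  "dual_code n C = {v \<in> ambient n. \<forall>c\<in>C. dot n v c = 0}"

end

theory Submission
  imports Defs "HOL-Computational_Algebra.Polynomial" "HOL-Library.FuncSet"
begin


definition sig :: "nat \<Rightarrow> 'a::{finite,field}" where
  "sig m = (\<Sum>a\<in>UNIV. a ^ m)"

lemma card_zero_field: "(of_nat (card (UNIV::'a::{finite,field} set)) :: 'a) = 0"
proof -
  have "(\<Sum>a\<in>(UNIV::'a set). a + 1) = (\<Sum>a\<in>UNIV. a)"
    by (rule sum.reindex_bij_witness[of _ "\<lambda>a. a - 1" "\<lambda>a. a + 1"]) auto
  moreover have "(\<Sum>a\<in>(UNIV::'a set). a + 1) = (\<Sum>a\<in>UNIV. a) + of_nat (card (UNIV::'a set))"
    by (simp add: sum.distrib)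
  ultimately show ?thesis by simp
qed

lemma card_ge2: "card (UNIV::'a::{finite,field} set) \<ge> 2"
proof -
  have "{0::'a, 1} \<subseteq> UNIV" by simp
  then have "card {0::'a,1} \<le> card (UNIV::'a set)" by (rule card_mono[OF finite_UNIV])
  then show ?thesis by simp
qed

lemma pow_card_minus1:
  fixes b :: "'a::{finite,field}"
  assumes "b \<noteq> 0"
  shows "b ^ (card (UNIV::'a set) - 1) = 1"
proof -
  let ?U = "UNIV - {0::'a}"
  have cU: "card ?U = card (UNIV::'a set) - 1" by (simp add: card_Diff_singleton)
  have "(\<Prod>a\<in>?U. b * a) = (\<Prod>a\<in>?U. a)"
    apply (rule prod.reindex_bij_witness[of _ "\<lambda>a. a / b" "\<lambda>a. b * a"])
    using assms by (auto simp: field_simps)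
  then have "b ^ card ?U * (\<Prod>a\<in>?U. a) = (\<Prod>a\<in>?U. a)"
    by (simp add: prod.distrib)
  moreover have "(\<Prod>a\<in>?U. a) \<noteq> 0" by (simp)
  ultimately have "b ^ card ?U = 1" by simp
  then show ?thesis using cU by simp
qed

lemma sig_0: "sig 0 = (0::'a::{finite,field})"
  unfolding sig_def using card_zero_field by simp

lemma sig_mult:
  assumes "m > 0" "(card (UNIV::'a::{finite,field} set) - 1) dvd m"
  shows "sig m = (-1::'a)"
proof -
  have "sig m = (\<Sum>a\<in>UNIV - {0::'a}. a ^ m) + 0 ^ m"
    unfolding sig_def by (subst sum.remove[of _ 0]) auto
  also have "\<dots> = (\<Sum>a\<in>UNIV - {0::'a}. 1)"
  proof -
    obtain d where d: "m = (card (UNIV::'a set) - 1) * d" using assms(2) by blast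
    have "\<And>a::'a. a \<noteq> 0 \<Longrightarrow> a ^ m = 1"
    proof -
      fix a :: 'a assume "a \<noteq> 0"
      then have "a ^ (card (UNIV::'a set) - 1) = 1" by (rule pow_card_minus1)
      then show "a ^ m = 1" by (simp add: d power_mult)
    qed
    then show ?thesis using assms(1) by simp
  qed
  also have "\<dots> = of_nat (card (UNIV::'a set)) - 1"
    using card_ge2[where 'a='a] by (simp add: card_Diff_singleton of_nat_diff)
  also have "\<dots> = -1" using card_zero_field[where 'a='a] by simp
  finally show ?thesis .
qed

lemma exists_nonroot:
  assumes "\<not> (card (UNIV::'a::{finite,field} set) - 1) dvd m"
  shows "\<exists>b::'a. b \<noteq> 0 \<and> b ^ m \<noteq> 1"
proof (rule ccontr)
  let ?Q = "card (UNIV::'a set) - 1"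
  assume "\<not> ?thesis"
  then have all: "\<And>b::'a. b \<noteq> 0 \<Longrightarrow> b ^ m = 1" by blast
  have m0: "m \<noteq> 0"
  proof
    assume "m = 0" with assms show False by simp
  qed
  define g where "g = gcd m ?Q"
  obtain x y where xy: "m * x = ?Q * y + g" using bezout_nat[OF m0] unfolding g_def by blast
  have gall: "\<And>b::'a. b \<noteq> 0 \<Longrightarrow> b ^ g = 1"
  proof -
    fix b :: 'a assume b: "b \<noteq> 0"
    have "b ^ (m * x) = 1" using all[OF b] by (simp add: power_mult)
    also have "b ^ (m*x) = (b ^ ?Q) ^ y * b ^ g" by (simp add: xy power_add power_mult)
    finally show "b ^ g = 1" using pow_card_minus1[OF b] by simp
  qed
  have g0: "g > 0" using m0 unfolding g_def by simp
  have gle: "g < ?Q"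
  proof -
    have "g dvd ?Q" unfolding g_def by simp
    moreover have "?Q > 0" using card_ge2[where 'a='a] by simp
    ultimately have "g \<le> ?Q" by (simp add: dvd_imp_le)
    moreover have "g \<noteq> ?Q"
    proof -
      have "g dvd m" unfolding g_def by simp
      then show ?thesis using assms by auto
    qed
    ultimately show ?thesis by simp
  qed
  define p :: "'a poly" where "p = monom 1 g - 1"
  have pev: "poly p x = x ^ g - 1" for x unfolding p_def by (simp add: poly_monom)
  have "poly p 0 \<noteq> 0" using g0 by (simp add: pev zero_power)
  then have p0: "p \<noteq> 0" by auto
  have dp: "degree p \<le> g" unfolding p_def by (rule degree_diff_le) (simp_all add: degree_monom_eq)
  have "UNIV - {0::'a} \<subseteq> {x. poly p x = 0}" using gall pev by auto
  then have "card (UNIV - {0::'a}) \<le> card {x. poly p x = 0}"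
    by (intro card_mono poly_roots_finite[OF p0])
  also have "\<dots> \<le> g" using card_poly_roots_bound[OF p0] dp by simp
  finally show False using gle by (simp add: card_Diff_singleton)
qed

lemma sig_nondvd:
  assumes "\<not> (card (UNIV::'a::{finite,field} set) - 1) dvd m"
  shows "sig m = (0::'a)"
proof -
  obtain b :: 'a where b: "b \<noteq> 0" "b ^ m \<noteq> 1" using exists_nonroot[OF assms] by blast
  have "sig m = (\<Sum>a\<in>UNIV. (b * a) ^ m)"
    unfolding sig_def
    by (rule sum.reindex_bij_witness[of _ "\<lambda>a. b * a" "\<lambda>a. a / b"]) (use b in auto)
  also have "\<dots> = b ^ m * sig m" unfolding sig_def by (simp add: power_mult_distrib sum_distrib_left)
  finally have "(1 - b ^ m) * sig m = 0" by (simp add: algebra_simps)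
  then show ?thesis using b by simp
qed



definition mnm :: "nat \<Rightarrow> (nat \<Rightarrow> nat) \<Rightarrow> (nat \<Rightarrow> 'a::field) \<Rightarrow> 'a" where
  "mnm n e x = (\<Prod>i\<le>n. x i ^ e i)"

definition HP :: "nat \<Rightarrow> nat \<Rightarrow> ((nat \<Rightarrow> 'a::field) \<Rightarrow> 'a) set" where
  "HP n k = range (hom_eval n k)"

lemma finite_trunc_funs:
  assumes "finite A"
  shows "finite {e::nat \<Rightarrow> 'b::zero. (\<forall>i>n. e i = 0) \<and> (\<forall>i\<le>n. e i \<in> A)}"
proof -
  let ?f = "\<lambda>xs i. if i \<le> n then xs ! i else (0::'b)"
  have "{e::nat \<Rightarrow> 'b. (\<forall>i>n. e i = 0) \<and> (\<forall>i\<le>n. e i \<in> A)} \<subseteq> ?f ` {xs. set xs \<subseteq> A \<and> length xs = Suc n}"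
  proof
    fix e :: "nat \<Rightarrow> 'b" assume e: "e \<in> {e. (\<forall>i>n. e i = 0) \<and> (\<forall>i\<le>n. e i \<in> A)}"
    have "e = ?f (map e [0..<Suc n])"
      using e by (auto simp: fun_eq_iff nth_map_upt simp del: upt_Suc)
    moreover have "map e [0..<Suc n] \<in> {xs. set xs \<subseteq> A \<and> length xs = Suc n}"
      using e by (auto simp del: upt_Suc)
    ultimately show "e \<in> ?f ` {xs. set xs \<subseteq> A \<and> length xs = Suc n}" by blast
  qed
  moreover have "finite (?f ` {xs. set xs \<subseteq> A \<and> length xs = Suc n})"
    using finite_lists_length_eq[OF assms] by blast
  ultimately show ?thesis by (rule finite_subset)
qed

lemma hom_monos_le: "e \<in> hom_monos n k \<Longrightarrow> i \<le> n \<Longrightarrow> e i \<le> k"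
  unfolding hom_monos_def using member_le_sum[of i "{..n}" e] by auto

lemma finite_hom_monos: "finite (hom_monos n k)"
proof -
  have "hom_monos n k \<subseteq> {e. (\<forall>i>n. e i = 0) \<and> (\<forall>i\<le>n. e i \<in> {..k})}"
    using hom_monos_le by (auto simp: hom_monos_def)
  then show ?thesis using finite_trunc_funs[of "{..k}" n] by (auto intro: finite_subset)
qed

lemma finite_proj_points: "finite (proj_points n :: (nat \<Rightarrow> 'a::{finite,field}) set)"
proof -
  have "proj_points n \<subseteq> {e::nat\<Rightarrow>'a. (\<forall>i>n. e i = 0) \<and> (\<forall>i\<le>n. e i \<in> UNIV)}"
    by (auto simp: proj_points_def)
  then show ?thesis using finite_trunc_funs[of "UNIV::'a set" n] by (auto intro: finite_subset)
qed

lemma hom_eval_mnm: "hom_eval n k c x = (\<Sum>e\<in>hom_monos n k. c e * mnm n e x)"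
  unfolding hom_eval_def mnm_def by simp

lemma hp_add: "f \<in> HP n k \<Longrightarrow> g \<in> HP n k \<Longrightarrow> (\<lambda>x. f x + g x) \<in> HP n k"
proof -
  assume "f \<in> HP n k" "g \<in> HP n k"
  then obtain c d where f: "f = hom_eval n k c" and g: "g = hom_eval n k d" by (auto simp: HP_def)
  have "(\<lambda>x. f x + g x) = hom_eval n k (\<lambda>e. c e + d e)"
    unfolding f g hom_eval_def by (simp add: fun_eq_iff sum.distrib distrib_right)
  then show ?thesis by (simp add: HP_def)
qed

lemma hp_scale: "f \<in> HP n k \<Longrightarrow> (\<lambda>x. t * f x) \<in> HP n k"
proof -
  assume "f \<in> HP n k"
  then obtain c where f: "f = hom_eval n k c" by (auto simp: HP_def)
  have "(\<lambda>x. t * f x) = hom_eval n k (\<lambda>e. t * c e)"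
    unfolding f hom_eval_def by (simp add: fun_eq_iff sum_distrib_left mult.assoc)
  then show ?thesis by (simp add: HP_def)
qed

lemma hp_zero: "(\<lambda>x. 0) \<in> HP n k"
proof -
  have "(\<lambda>x. 0) = hom_eval n k (\<lambda>e. 0)" unfolding hom_eval_def by (simp add: fun_eq_iff)
  then show ?thesis unfolding HP_def by (metis rangeI)
qed

lemma hp_diff: "f \<in> HP n k \<Longrightarrow> g \<in> HP n k \<Longrightarrow> (\<lambda>x. f x - g x) \<in> HP n k"
  using hp_add[of f n k "\<lambda>x. (-1) * g x"] hp_scale[of g n k "-1"] by simp

lemma hp_mono: "f \<in> hom_monos n k \<Longrightarrow> (mnm n f :: (nat \<Rightarrow> 'a::field) \<Rightarrow> 'a) \<in> HP n k"
proof -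
  assume f: "f \<in> hom_monos n k"
  have eq: "hom_eval n k (\<lambda>e. if e = f then 1 else 0) x = mnm n f x" for x :: "nat \<Rightarrow> 'a"
  proof -
    have "hom_eval n k (\<lambda>e. if e = f then 1 else 0) x = (\<Sum>e\<in>hom_monos n k. if e = f then mnm n e x else 0)"
      unfolding hom_eval_mnm by (rule sum.cong) auto
    also have "\<dots> = mnm n f x" using f finite_hom_monos by simp
    finally show ?thesis .
  qed
  have "(mnm n f :: (nat \<Rightarrow> 'a) \<Rightarrow> 'a) = hom_eval n k (\<lambda>e. if e = f then 1 else 0)" by (rule ext) (rule eq[symmetric])
  then show ?thesis unfolding HP_def by (metis rangeI)
qed

lemma mnm_add: "mnm n (\<lambda>i. e i + f i) x = mnm n e x * mnm n f x"
  unfolding mnm_def by (simp add: power_add prod.distrib)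

lemma hom_monos_add: "e \<in> hom_monos n a \<Longrightarrow> f \<in> hom_monos n b \<Longrightarrow> (\<lambda>i. e i + f i) \<in> hom_monos n (a + b)"
  unfolding hom_monos_def by (simp add: sum.distrib)

lemma hp_mult:
  assumes "f \<in> HP n a" "g \<in> HP n b"
  shows "(\<lambda>x. f x * g x) \<in> HP n (a + b)"
proof -
  obtain c d where f: "f = hom_eval n a c" and g: "g = hom_eval n b d" using assms by (auto simp: HP_def)
  let ?Ma = "hom_monos n a" and ?Mb = "hom_monos n b" and ?M = "hom_monos n (a+b)"
  let ?pl = "\<lambda>ef::(nat\<Rightarrow>nat)\<times>(nat\<Rightarrow>nat). (\<lambda>i. fst ef i + snd ef i)"
  define c2 where "c2 h = (\<Sum>ef\<in>{ef \<in> ?Ma \<times> ?Mb. ?pl ef = h}. c (fst ef) * d (snd ef))" for h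
  have "f x * g x = hom_eval n (a+b) c2 x" for x
  proof -
    have "f x * g x = (\<Sum>e\<in>?Ma. \<Sum>e'\<in>?Mb. (c e * mnm n e x) * (d e' * mnm n e' x))"
      unfolding f g hom_eval_mnm by (rule sum_product)
    also have "\<dots> = (\<Sum>ef\<in>?Ma \<times> ?Mb. c (fst ef) * d (snd ef) * mnm n (?pl ef) x)"
      by (simp add: sum.cartesian_product mnm_add case_prod_beta mult_ac)
    also have "\<dots> = (\<Sum>h\<in>?M. \<Sum>ef\<in>{ef \<in> ?Ma \<times> ?Mb. ?pl ef = h}. c (fst ef) * d (snd ef) * mnm n (?pl ef) x)"
      by (rule sum.group[symmetric]) (auto simp: finite_hom_monos intro: hom_monos_add)
    also have "\<dots> = (\<Sum>h\<in>?M. c2 h * mnm n h x)"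
      unfolding c2_def sum_distrib_right by (rule sum.cong) (auto intro!: sum.cong)
    finally show ?thesis unfolding hom_eval_mnm .
  qed
  then show ?thesis by (auto simp: HP_def)
qed

lemma hp_var: "i \<le> n \<Longrightarrow> (\<lambda>x::nat \<Rightarrow> 'a::field. x i) \<in> HP n 1"
proof -
  assume i: "i \<le> n"
  let ?e = "\<lambda>j. if j = i then 1 else (0::nat)"
  have "?e \<in> hom_monos n 1" using i by (simp add: hom_monos_def)
  moreover have "mnm n ?e = (\<lambda>x::nat \<Rightarrow> 'a. x i)"
    unfolding mnm_def using i by (simp add: fun_eq_iff if_distrib[of "\<lambda>e. _ ^ e"] prod.If_cases Int_absorb1 cong: if_cong)
  ultimately show ?thesis using hp_mono[of ?e n 1, where 'a='a] by simp
qed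

lemma hp_const: "(\<lambda>x. t) \<in> (HP n 0 :: ((nat \<Rightarrow> 'a::field) \<Rightarrow> 'a) set)"
proof -
  have "(\<lambda>_. 0::nat) \<in> hom_monos n 0" by (simp add: hom_monos_def)
  then have "(mnm n (\<lambda>_. 0) :: (nat \<Rightarrow> 'a) \<Rightarrow> 'a) \<in> HP n 0" by (rule hp_mono)
  moreover have "(mnm n (\<lambda>_. 0) :: (nat \<Rightarrow> 'a) \<Rightarrow> 'a) = (\<lambda>x. 1)" by (simp add: mnm_def fun_eq_iff)
  ultimately have "(\<lambda>x. 1) \<in> (HP n 0 :: ((nat \<Rightarrow> 'a) \<Rightarrow> 'a) set)" by metis
  from hp_scale[OF this, of t] show ?thesis by simp
qed

lemma hp_lift:
  assumes "m \<le> n" "f \<in> HP m k"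
  shows "f \<in> HP n k"
proof -
  obtain c where f: "f = hom_eval m k c" using assms by (auto simp: HP_def)
  define c' where "c' e = (if e \<in> hom_monos m k then c e else 0)" for e
  have sub: "hom_monos m k \<subseteq> hom_monos n k"
  proof
    fix e assume e: "e \<in> hom_monos m k"
    have "(\<Sum>i\<le>n. e i) = (\<Sum>i\<le>m. e i)"
      using e assms(1) by (intro sum.mono_neutral_right) (auto simp: hom_monos_def)
    then show "e \<in> hom_monos n k" using e assms(1) by (auto simp: hom_monos_def)
  qed
  have mono_eq: "mnm n e x = mnm m e x" if "e \<in> hom_monos m k" for e x
    unfolding mnm_def using that assms(1) by (intro prod.mono_neutral_right) (auto simp: hom_monos_def)
  have "f x = hom_eval n k c' x" for x
  proof -
    have "f x = (\<Sum>e\<in>hom_monos m k. c e * mnm n e x)"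
      unfolding f hom_eval_mnm by (rule sum.cong) (auto simp: mono_eq)
    also have "\<dots> = (\<Sum>e\<in>hom_monos n k. c' e * mnm n e x)"
      by (rule sum.mono_neutral_cong_left) (use sub in \<open>auto simp: finite_hom_monos c'_def\<close>)
    finally show ?thesis unfolding hom_eval_mnm .
  qed
  then show ?thesis by (auto simp: HP_def)
qed

lemma hp_local:
  assumes "f \<in> HP m k" "m < i"
  shows "f (x(i := a)) = f x"
proof -
  obtain c where f: "f = hom_eval m k c" using assms by (auto simp: HP_def)
  show ?thesis unfolding f hom_eval_def using assms(2) by (intro sum.cong refl arg_cong2[where f="(*)"] prod.cong) auto
qed

lemma hp_prod:
  assumes "\<And>u. u < R \<Longrightarrow> L u \<in> HP n 1"
  shows "(\<lambda>x. \<Prod>u<R. L u x) \<in> HP n R"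
  using assms
proof (induction R)
  case 0
  then show ?case using hp_const[of 1 n] by simp
next
  case (Suc R)
  then have "(\<lambda>x. (\<Prod>u<R. L u x) * L R x) \<in> HP n (R + 1)" by (intro hp_mult) auto
  then show ?case by simp
qed



definition delta :: "nat \<Rightarrow> nat \<Rightarrow> 'a::field" where
  "delta j = (\<lambda>i. if i = j then 1 else 0)"

definition Ssum :: "nat \<Rightarrow> (nat \<Rightarrow> nat) \<Rightarrow> 'a::{finite,field}" where
  "Ssum n g = (\<Sum>P\<in>proj_points n. mnm n g P)"

lemma pp_0: "proj_points 0 = {delta 0 :: nat \<Rightarrow> 'a::field}"
  by (auto simp: proj_points_def delta_def fun_eq_iff)

lemma pp_Suc: "proj_points (Suc n) =
   (\<lambda>(p,a). p(Suc n := a)) ` (proj_points n \<times> (UNIV::'a::field set)) \<union> {delta (Suc n)}"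
proof (rule set_eqI)
  fix P :: "nat \<Rightarrow> 'a"
  show "P \<in> proj_points (Suc n) \<longleftrightarrow> P \<in> (\<lambda>(p,a). p(Suc n := a)) ` (proj_points n \<times> UNIV) \<union> {delta (Suc n)}"
  proof
    assume P: "P \<in> proj_points (Suc n)"
    then obtain j where j: "j \<le> Suc n" "P j = 1" "\<forall>i<j. P i = 0" and z: "\<forall>i>Suc n. P i = 0"
      by (auto simp: proj_points_def)
    show "P \<in> (\<lambda>(p,a). p(Suc n := a)) ` (proj_points n \<times> UNIV) \<union> {delta (Suc n)}"
    proof (cases "j = Suc n")
      case True
      then have "P = delta (Suc n)" using j z by (auto simp: delta_def fun_eq_iff) (metis linorder_neqE_nat)
      then show ?thesis by simp
    next
      case False
      then have "P(Suc n := 0) \<in> proj_points n" using j z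
        by (auto simp: proj_points_def intro!: exI[of _ j])
      moreover have "P = (\<lambda>(p,a). p(Suc n := a)) (P(Suc n := 0), P (Suc n))" by simp
      ultimately have "P \<in> (\<lambda>(p,a). p(Suc n := a)) ` (proj_points n \<times> UNIV)"
        by (intro image_eqI[of P _ "(P(Suc n := 0), P (Suc n))"]) auto
      then show ?thesis by blast
    qed
  next
    assume "P \<in> (\<lambda>(p,a). p(Suc n := a)) ` (proj_points n \<times> UNIV) \<union> {delta (Suc n)}"
    then show "P \<in> proj_points (Suc n)"
    proof
      assume "P \<in> (\<lambda>(p,a). p(Suc n := a)) ` (proj_points n \<times> UNIV)"
      then obtain p a where p: "p \<in> proj_points n" and P: "P = p(Suc n := a)" by auto
      from p obtain j where "j \<le> n" "p j = 1" "\<forall>i<j. p i = 0" "\<forall>i>n. p i = 0"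
        by (auto simp: proj_points_def)
      then show ?thesis unfolding P proj_points_def by (auto intro!: exI[of _ j])
    next
      assume "P \<in> {delta (Suc n)}"
      then show ?thesis by (auto simp: proj_points_def delta_def intro!: exI[of _ "Suc n"])
    qed
  qed
qed

lemma sum_pp_Suc:
  fixes \<phi> :: "(nat \<Rightarrow> 'a::{finite,field}) \<Rightarrow> 'b::comm_monoid_add"
  shows "(\<Sum>P\<in>proj_points (Suc n). \<phi> P) = (\<Sum>p\<in>proj_points n. \<Sum>a\<in>UNIV. \<phi> (p(Suc n := a))) + \<phi> (delta (Suc n))"
proof -
  let ?f = "\<lambda>(p,a). p(Suc n := a)" and ?A = "proj_points n \<times> (UNIV::'a set)"
  have inj: "inj_on ?f ?A"
  proof (rule inj_onI)
    fix x y assume x: "x \<in> ?A" and y: "y \<in> ?A" and e: "?f x = ?f y"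
    obtain p a where [simp]: "x = (p,a)" by (cases x)
    obtain p' a' where [simp]: "y = (p',a')" by (cases y)
    have "p (Suc n) = 0" "p' (Suc n) = 0" using x y by (auto simp: proj_points_def)
    with e show "x = y" by (auto simp: fun_eq_iff) (metis fun_upd_apply)+
  qed
  have disj: "?f ` ?A \<inter> {delta (Suc n)} = {}"
  proof -
    have "delta (Suc n) \<notin> ?f ` ?A"
    proof
      assume "delta (Suc n) \<in> ?f ` ?A"
      then obtain x where x: "x \<in> ?A" and e0: "delta (Suc n) = ?f x"
        by (rule imageE)
      obtain p a where pa: "x = (p, a)" by (cases x)
      note pa[simp]
      have p: "p \<in> proj_points n" using x pa by simp
      have e: "delta (Suc n) = p(Suc n := a)" using e0 pa by simp
      from p obtain j where "j \<le> n" "p j = 1" by (auto simp: proj_points_def)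
      have "(delta (Suc n) :: nat \<Rightarrow> 'a) j = (p(Suc n := a)) j" using e by simp
      then show False using \<open>j \<le> n\<close> \<open>p j = 1\<close> by (simp add: delta_def)
    qed
    then show ?thesis by auto
  qed
  have fin: "finite (?f ` ?A)" using finite_proj_points[of n, where 'a='a] by simp
  have "(\<Sum>P\<in>proj_points (Suc n). \<phi> P) = (\<Sum>P\<in>?f ` ?A. \<phi> P) + \<phi> (delta (Suc n))"
    unfolding pp_Suc by (subst sum.union_disjoint) (use disj fin in auto)
  also have "(\<Sum>P\<in>?f ` ?A. \<phi> P) = (\<Sum>x\<in>?A. \<phi> (?f x))" by (rule sum.reindex[OF inj, unfolded comp_def])
  also have "\<dots> = (\<Sum>p\<in>proj_points n. \<Sum>a\<in>UNIV. \<phi> (p(Suc n := a)))"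
    by (simp add: sum.cartesian_product case_prod_beta)
  finally show ?thesis .
qed

lemma prod_zero_pow: "(\<Prod>i\<le>(n::nat). (0::'a::field) ^ g i) = (if \<forall>i\<le>n. g i = 0 then 1 else 0)"
proof (cases "\<forall>i\<le>n. g i = 0")
  case True then show ?thesis by simp
next
  case False
  then obtain i where i: "i \<le> n" "g i \<noteq> 0" by auto
  have "(\<Prod>i\<le>n. (0::'a::field) ^ g i) = 0"
    by (rule prod_zero) (use i in auto)
  then show ?thesis using False by simp
qed

lemma Ssum_Suc: "(Ssum (Suc n) g :: 'a::{finite,field}) =
   Ssum n g * sig (g (Suc n)) + (if \<forall>i\<le>n. g i = 0 then 1 else 0)"
proof -
  have m1: "mnm (Suc n) g (p(Suc n := a)) = mnm n g p * a ^ g (Suc n)" for p :: "nat \<Rightarrow> 'a" and a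
    unfolding mnm_def by (simp add: prod.atMost_Suc)
  have "(\<Prod>i\<le>n. (delta (Suc n) i :: 'a) ^ g i) = (\<Prod>i\<le>n. 0 ^ g i)"
    by (rule prod.cong) (auto simp: delta_def)
  then have m2: "mnm (Suc n) g (delta (Suc n) :: nat \<Rightarrow> 'a) = (if \<forall>i\<le>n. g i = 0 then 1 else 0)"
    unfolding mnm_def prod.atMost_Suc by (simp add: prod_zero_pow del: prod.atMost_Suc) (simp add: delta_def)
  show ?thesis
    unfolding Ssum_def sum_pp_Suc m1 m2 sig_def by (simp add: sum_distrib_left sum_distrib_right) (rule sum.swap)
qed

lemma Ssum_zero: "\<forall>i\<le>n. g i = 0 \<Longrightarrow> (Ssum n g :: 'a::{finite,field}) = 1"
proof (induction n)
  case 0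
  then show ?case by (simp add: Ssum_def pp_0 mnm_def)
next
  case (Suc n)
  then show ?case by (simp add: Ssum_Suc sig_0)
qed

abbreviation QQ :: "'a::{finite,field} itself \<Rightarrow> nat" where
  "QQ _ \<equiv> card (UNIV::'a set) - 1"

lemma Ssum_vanish:
  assumes "(card (UNIV::'a::{finite,field} set) - 1) dvd (\<Sum>i\<le>n. g i)"
    and "0 < (\<Sum>i\<le>n. g i)" and "(\<Sum>i\<le>n. g i) \<le> n * (card (UNIV::'a set) - 1)"
  shows "(Ssum n g :: 'a) = 0"
  using assms
proof (induction n)
  case 0
  then show ?case by simp
next
  case (Suc n)
  let ?Q = "card (UNIV::'a set) - 1"
  have Q0: "?Q > 0" using card_ge2[where 'a='a] by simp
  have split: "(\<Sum>i\<le>Suc n. g i) = (\<Sum>i\<le>n. g i) + g (Suc n)" by simp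
  show ?case
  proof (cases "\<forall>i\<le>n. g i = 0")
    case True
    then have s0: "(\<Sum>i\<le>n. g i) = 0" by simp
    have "sig (g (Suc n)) = (-1::'a)"
      using Suc.prems s0 split by (intro sig_mult) auto
    then show ?thesis using True by (simp add: Ssum_Suc Ssum_zero)
  next
    case False
    show ?thesis
    proof (cases "?Q dvd g (Suc n) \<and> 0 < g (Suc n)")
      case True
      have "?Q \<le> g (Suc n)" using True by (simp add: dvd_imp_le)
      then have le: "(\<Sum>i\<le>n. g i) \<le> n * ?Q" using Suc.prems(3) split by simp
      have dv: "?Q dvd (\<Sum>i\<le>n. g i)" using Suc.prems(1) True split by (simp add: dvd_add_left_iff)
      from False obtain i where i: "i \<le> n" "g i \<noteq> 0" by auto
      then have "g i \<le> (\<Sum>i\<le>n. g i)" by (intro member_le_sum) auto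
      then have pos: "0 < (\<Sum>i\<le>n. g i)" using i by simp
      have "Ssum n g = (0::'a)" by (rule Suc.IH[OF dv pos le])
      then show ?thesis using False by (simp add: Ssum_Suc)
    next
      case False2: False
      have "sig (g (Suc n)) = (0::'a)"
      proof (cases "g (Suc n) = 0")
        case True then show ?thesis by (simp add: sig_0)
      next
        case False then show ?thesis using False2 by (intro sig_nondvd) auto
      qed
      then show ?thesis using False by (simp add: Ssum_Suc)
    qed
  qed
qed

lemma Ssum_single:
  assumes "\<not> (card (UNIV::'a::{finite,field} set) - 1) dvd m"
  shows "(Ssum (Suc n) (\<lambda>i. if i = Suc n then m else 0) :: 'a) = 1"
  using assms by (simp add: Ssum_Suc sig_nondvd)

lemma Ssum_special:
  assumes "0 < g 0" and "\<forall>i. 1 \<le> i \<and> i \<le> n \<longrightarrow> g i = card (UNIV::'a::{finite,field} set) - 1"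
  shows "(Ssum n g :: 'a) = (-1) ^ n"
  using assms
proof (induction n)
  case 0
  then show ?case by (simp add: Ssum_def pp_0 mnm_def delta_def)
next
  case (Suc n)
  have Q0: "card (UNIV::'a set) - 1 > 0" using card_ge2[where 'a='a] by simp
  have "sig (g (Suc n)) = (-1::'a)" using Suc.prems Q0 by (intro sig_mult) auto
  moreover have "\<not> (\<forall>i\<le>n. g i = 0)" using Suc.prems by auto
  ultimately show ?case using Suc by (simp add: Ssum_Suc)
qed



definition vecF :: "nat \<Rightarrow> ((nat \<Rightarrow> 'a::field) \<Rightarrow> 'a) \<Rightarrow> (nat \<Rightarrow> 'a) \<Rightarrow> 'a" where
  "vecF n F = (\<lambda>P. if P \<in> proj_points n then F P else 0)"

lemma vecF_in_RM: "F \<in> HP n k \<Longrightarrow> vecF n F \<in> proj_RM n k"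
  unfolding HP_def proj_RM_def vecF_def by auto

lemma RM_elem: "v \<in> proj_RM n k \<Longrightarrow> \<exists>F\<in>HP n k. v = vecF n F"
  unfolding HP_def proj_RM_def vecF_def by auto

lemma vecF_ambient: "vecF n F \<in> ambient n"
  unfolding ambient_def vecF_def by auto

lemma dot_vecF: "dot n (vecF n F) (vecF n G) = (\<Sum>P\<in>proj_points n. F P * G P)"
  unfolding dot_def vecF_def by simp

lemma sum_HP:
  assumes "F = hom_eval n K c"
  shows "(\<Sum>P\<in>proj_points n. F P) = (\<Sum>g\<in>hom_monos n K. c g * (Ssum n g :: 'a::{finite,field}))"
  unfolding assms hom_eval_mnm Ssum_def sum_distrib_left by (rule sum.swap)

lemma orth_HP:
  assumes "F \<in> HP n K" "(card (UNIV::'a::{finite,field} set) - 1) dvd K" "0 < K" "K \<le> n * (card (UNIV::'a set) - 1)"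
  shows "(\<Sum>P\<in>proj_points n. (F P :: 'a)) = 0"
proof -
  obtain c where c: "F = hom_eval n K c" using assms(1) by (auto simp: HP_def)
  have "\<And>g. g \<in> hom_monos n K \<Longrightarrow> (Ssum n g :: 'a) = 0"
    using assms by (intro Ssum_vanish) (auto simp: hom_monos_def)
  then show ?thesis unfolding sum_HP[OF c] by simp
qed

lemma dot_mnm_self:
  "dot n (vecF n (mnm n f)) (vecF n (mnm n f)) = (Ssum n (\<lambda>i. f i + f i) :: 'a::{finite,field})"
  unfolding dot_vecF Ssum_def mnm_add by simp

lemma only_if_dir:
  fixes n k :: nat
    and C :: "((nat \<Rightarrow> 'a::{finite,field}) \<Rightarrow> 'a) set"
  assumes CC: "C = proj_RM n k"
    and n1: "n \<ge> 1" and k1: "1 \<le> k" and kle: "k \<le> n * (card (UNIV :: 'a set) - 1)"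
    and sd: "C = dual_code n C"
  shows "odd (card (UNIV :: 'a set)) \<and> odd n \<and> k = n * (card (UNIV :: 'a set) - 1) div 2"
proof (rule ccontr)
  assume goal: "\<not> ?thesis"
  define q where "q = card (UNIV :: 'a set)"
  define Q where "Q = q - 1"
  have q2: "q \<ge> 2" unfolding q_def by (rule card_ge2)
  have Q1: "Q \<ge> 1" using q2 unfolding Q_def by simp
  have self: "dot n v v = 0" if "v \<in> C" for v
    using that sd unfolding dual_code_def by blast
  have perp: "dot n w w = 0" if "w \<in> ambient n" "\<And>c. c \<in> C \<Longrightarrow> dot n w c = 0" for w
  proof -
    have "w \<in> C" using that sd unfolding dual_code_def by blast
    then show ?thesis using that(2) by blast
  qed
  have CHP: "\<exists>G\<in>HP n k. c = vecF n G" if "c \<in> C" for c using that CC RM_elem by blast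
  obtain n' where n': "n = Suc n'" using n1 by (cases n) auto
  show False
  proof (cases "Q dvd 2 * k")
    case False
    define f where "f = (\<lambda>i. if i = n then k else (0::nat))"
    have fM: "f \<in> hom_monos n k" unfolding f_def hom_monos_def by simp
    have "vecF n (mnm n f) \<in> C" using CC vecF_in_RM hp_mono[OF fM] by blast
    then have "dot n (vecF n (mnm n f)) (vecF n (mnm n f)) = (0::'a)" by (rule self)
    moreover have "(\<lambda>i. f i + f i) = (\<lambda>i. if i = Suc n' then 2 * k else 0)"
      unfolding f_def n' by auto
    moreover have "(Ssum (Suc n') (\<lambda>i. if i = Suc n' then 2 * k else 0) :: 'a) = 1"
      by (rule Ssum_single) (use False in \<open>simp add: Q_def q_def\<close>)
    ultimately show False unfolding dot_mnm_self n' by simp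
  next
    case dv2: True
    show False
    proof (cases "Q dvd k")
      case True
      define w where "w = vecF n (\<lambda>x::nat \<Rightarrow> 'a. 1)"
      have "dot n w c = 0" if cC: "c \<in> C" for c
      proof -
        obtain G where G: "G \<in> HP n k" "c = vecF n G" using CHP[OF cC] by blast
        have "dot n w c = (\<Sum>P\<in>proj_points n. G P)" unfolding w_def G(2) dot_vecF by simp
        also have "\<dots> = 0" using orth_HP[OF G(1)] True k1 kle by (simp add: Q_def q_def)
        finally show ?thesis .
      qed
      then have "dot n w w = 0" using perp vecF_ambient unfolding w_def by blast
      moreover have "dot n w w = (Ssum n (\<lambda>_. 0) :: 'a)"
        unfolding w_def dot_vecF Ssum_def by (simp add: mnm_def)
      moreover have "(Ssum n (\<lambda>_. 0) :: 'a) = 1" by (rule Ssum_zero) simp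
      ultimately show False by simp
    next
      case ndk: False
      have evQ: "even Q"
      proof (rule ccontr)
        assume "odd Q"
        then have "coprime Q 2" by (simp add: coprime_commute)
        then have "Q dvd k" using dv2 coprime_dvd_mult_right_iff by blast
        then show False using ndk by simp
      qed
      define h where "h = Q div 2"
      have Qh: "Q = 2 * h" unfolding h_def using evQ by simp
      have h1: "h \<ge> 1" using Q1 Qh by simp
      have hh: "h + h = card (UNIV::'a set) - 1" using Qh unfolding Q_def q_def by simp
      have oq: "odd q" using evQ q2 unfolding Q_def by (cases q) auto
      have ne: "2 * k \<noteq> n * Q"
      proof
        assume e: "2 * k = n * Q"
        show False
        proof (cases "odd n")
          case True
          have "k = n * Q div 2" using e by simp
          then show False using goal True oq by (simp add: q_def Q_def)
        next
          case False
          then obtain m where "n = 2 * m" by (auto elim: evenE)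
          then have "k = m * Q" using e by simp
          then show False using ndk by simp
        qed
      qed
      define f0 where "f0 = (if 2 * k > n * Q then k - n * h else n * h - k)"
      have f0pos: "f0 > 0" using ne unfolding f0_def Qh by auto
      define f where "f = (\<lambda>i. if i = 0 then f0 else if i \<le> n then h else (0::nat))"
      have sumf: "(\<Sum>i\<le>n. f i) = f0 + n * h"
      proof -
        have "{..n} = insert 0 {1..n}" by auto
        then have "(\<Sum>i\<le>n. f i) = f 0 + (\<Sum>i\<in>{1..n}. f i)" by simp
        also have "(\<Sum>i\<in>{1..n}. f i) = (\<Sum>i\<in>{1..n}. h)" by (rule sum.cong) (auto simp: f_def)
        finally show ?thesis by (simp add: f_def)
      qed
      have S2: "(Ssum n (\<lambda>i. f i + f i) :: 'a) = (-1) ^ n"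
        by (rule Ssum_special) (use f0pos hh in \<open>auto simp: f_def\<close>)
      have Snz: "(Ssum n (\<lambda>i. f i + f i) :: 'a) \<noteq> 0" unfolding S2 by simp
      show False
      proof (cases "2 * k > n * Q")
        case True
        have fM: "f \<in> hom_monos n k" unfolding hom_monos_def using sumf True
          by (auto simp: f_def f0_def Qh)
        have "vecF n (mnm n f) \<in> C" using CC vecF_in_RM hp_mono[OF fM] by blast
        then have "dot n (vecF n (mnm n f)) (vecF n (mnm n f)) = (0::'a)" by (rule self)
        then show False using Snz unfolding dot_mnm_self by simp
      next
        case False
        then have lt: "2 * k < n * Q" using ne by simp
        have fM: "f \<in> hom_monos n (n * Q - k)" unfolding hom_monos_def using sumf lt
          by (auto simp: f_def f0_def Qh)
        have "dot n (vecF n (mnm n f)) c = 0" if cC: "c \<in> C" for c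
        proof -
          obtain G where G: "G \<in> HP n k" "c = vecF n G" using CHP[OF cC] by blast
          have pr: "(\<lambda>x. mnm n f x * G x) \<in> HP n (n * Q - k + k)"
            by (rule hp_mult[OF hp_mono[OF fM] G(1)])
          have "dot n (vecF n (mnm n f)) c = (\<Sum>P\<in>proj_points n. mnm n f P * G P)"
            unfolding G(2) dot_vecF by simp
          also have "\<dots> = 0"
            using orth_HP[OF pr] lt Q1 n1 by (simp add: Q_def q_def)
          finally show ?thesis .
        qed
        then have "dot n (vecF n (mnm n f)) (vecF n (mnm n f)) = (0::'a)"
          using perp vecF_ambient by blast
        then show False using Snz unfolding dot_mnm_self by simp
      qed
    qed
  qed
qed



fun bb :: "nat \<Rightarrow> nat \<Rightarrow> int \<Rightarrow> int" where
  "bb Q 0 t = (if t = 0 then 1 else 0)"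
| "bb Q (Suc m) t = (\<Sum>a\<le>Q. bb Q m (t - int a))"

definition LL :: "nat \<Rightarrow> nat \<Rightarrow> int \<Rightarrow> int" where
  "LL Q m \<theta> = (\<Sum>t\<in>{0..<\<theta>}. bb Q m t)"

lemma bb_out: "t < 0 \<or> t > int m * int Q \<Longrightarrow> bb Q m t = 0"
proof (induction m arbitrary: t)
  case 0
  then show ?case by auto
next
  case (Suc m)
  have "bb Q m (t - int a) = 0" if "a \<le> Q" for a
    using Suc.prems that by (intro Suc.IH) (auto simp: algebra_simps)
  then show ?case by simp
qed

lemma bb_window:
  assumes "finite A"
  shows "(\<Sum>t\<in>A. bb Q m t) = (\<Sum>t\<in>{0..int (m*Q)}. if t \<in> A then bb Q m t else 0)"
proof -
  have "(\<Sum>t\<in>{0..int (m*Q)}. if t \<in> A then bb Q m t else 0) = (\<Sum>t\<in>{x\<in>{0..int (m*Q)}. x \<in> A}. bb Q m t)"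
    by (rule sum.inter_filter[symmetric]) simp
  also have "\<dots> = (\<Sum>t\<in>A. bb Q m t)"
    by (rule sum.mono_neutral_left) (use assms in \<open>auto intro!: bb_out\<close>)
  finally show ?thesis by simp
qed

lemma bb_total: "(\<Sum>t\<in>{0..int (m*Q)}. bb Q m t) = int (Suc Q) ^ m"
proof (induction m)
  case 0
  then show ?case by simp
next
  case (Suc m)
  have inner: "(\<Sum>t\<in>{0..int (Suc m * Q)}. bb Q m (t - int a)) = int (Suc Q) ^ m" if a: "a \<le> Q" for a
  proof -
    have "(\<Sum>t\<in>{0..int (Suc m * Q)}. bb Q m (t - int a)) = (\<Sum>t\<in>(\<lambda>t. t - int a) ` {0..int (Suc m * Q)}. bb Q m t)"
      by (subst sum.reindex) (auto simp: inj_on_def)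
    also have "\<dots> = (\<Sum>t\<in>{0..int (m*Q)}. if t \<in> (\<lambda>t. t - int a) ` {0..int (Suc m * Q)} then bb Q m t else 0)"
      by (rule bb_window) simp
    also have "\<dots> = (\<Sum>t\<in>{0..int (m*Q)}. bb Q m t)"
    proof (rule sum.cong)
      fix t assume t: "t \<in> {0..int (m*Q)}"
      have "t \<in> (\<lambda>t. t - int a) ` {0..int (Suc m * Q)}"
        by (rule image_eqI[of _ _ "t + int a"]) (use t a in auto)
      then show "(if t \<in> (\<lambda>t. t - int a) ` {0..int (Suc m * Q)} then bb Q m t else 0) = bb Q m t" by simp
    qed simp
    finally show ?thesis using Suc.IH by simp
  qed
  have "(\<Sum>t\<in>{0..int (Suc m * Q)}. bb Q (Suc m) t) = (\<Sum>a\<le>Q. \<Sum>t\<in>{0..int (Suc m * Q)}. bb Q m (t - int a))"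
    by (simp del: mult_Suc) (rule sum.swap)
  also have "\<dots> = (\<Sum>a\<le>Q. int (Suc Q) ^ m)" by (intro sum.cong refl inner) simp
  finally show ?case by simp
qed

lemma bb_sym: "bb Q m t = bb Q m (int (m * Q) - t)"
proof (induction m arbitrary: t)
  case 0
  then show ?case by auto
next
  case (Suc m)
  have "bb Q (Suc m) (int (Suc m * Q) - t) = (\<Sum>a\<le>Q. bb Q m (int (Suc m * Q) - t - int a))" by simp
  also have "\<dots> = (\<Sum>a\<le>Q. bb Q m (t - int (Q - a)))"
  proof (rule sum.cong)
    fix a assume "a \<in> {..Q}"
    then have e: "int (Suc m * Q) - t - int a = int (m * Q) - (t - int (Q - a))" by (simp add: of_nat_diff algebra_simps)
    show "bb Q m (int (Suc m * Q) - t - int a) = bb Q m (t - int (Q - a))" unfolding e by (rule Suc.IH[symmetric])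
  qed simp
  also have "\<dots> = (\<Sum>a<Suc Q. bb Q m (t - int (Suc Q - Suc a)))" by (simp add: lessThan_Suc_atMost)
  also have "\<dots> = (\<Sum>a<Suc Q. bb Q m (t - int a))" by (rule sum.nat_diff_reindex)
  finally show ?case by (simp add: lessThan_Suc_atMost)
qed

lemma LL_window: "LL Q m \<theta> = (\<Sum>t\<in>{0..int (m*Q)}. if t < \<theta> then bb Q m t else 0)"
  unfolding LL_def by (subst bb_window) (auto intro!: sum.cong)

lemma LL_nonpos: "\<theta> \<le> 0 \<Longrightarrow> LL Q m \<theta> = 0"
  unfolding LL_def by simp

lemma LL_step: "0 \<le> \<theta> \<Longrightarrow> LL Q m (\<theta> + 1) = LL Q m \<theta> + bb Q m \<theta>"
proof -
  assume "0 \<le> \<theta>"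
  then have "{0..<\<theta> + 1} = insert \<theta> {0..<\<theta>}" by auto
  then show ?thesis unfolding LL_def by simp
qed

lemma LL_Suc: "LL Q (Suc m) \<theta> = (\<Sum>a\<le>Q. LL Q m (\<theta> - int a))"
proof -
  have "LL Q (Suc m) \<theta> = (\<Sum>a\<le>Q. \<Sum>t\<in>{0..<\<theta>}. bb Q m (t - int a))"
    unfolding LL_def by (simp add: sum.swap[of _ "{0..<\<theta>}"])
  also have "\<dots> = (\<Sum>a\<le>Q. LL Q m (\<theta> - int a))"
  proof (rule sum.cong)
    fix a assume "a \<in> {..Q}"
    have "(\<Sum>t\<in>{0..<\<theta>}. bb Q m (t - int a)) = (\<Sum>t\<in>(\<lambda>t. t - int a) ` {0..<\<theta>}. bb Q m t)"
      by (subst sum.reindex) (auto simp: inj_on_def)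
    also have "(\<lambda>t. t - int a) ` {0..<\<theta>} = {- int a..<\<theta> - int a}"
    proof (rule set_eqI)
      fix x show "x \<in> (\<lambda>t. t - int a) ` {0..<\<theta>} \<longleftrightarrow> x \<in> {- int a..<\<theta> - int a}"
        by (auto intro: image_eqI[of _ _ "x + int a"])
    qed
    also have "(\<Sum>t\<in>{- int a..<\<theta> - int a}. bb Q m t) = LL Q m (\<theta> - int a)"
      unfolding LL_def by (rule sum.mono_neutral_right) (auto intro: bb_out)
    finally show "(\<Sum>t\<in>{0..<\<theta>}. bb Q m (t - int a)) = LL Q m (\<theta> - int a)" .
  qed simp
  finally show ?thesis .
qed

lemma LL_sym: "LL Q m \<theta> + LL Q m (int (m*Q) + 1 - \<theta>) = int (Suc Q) ^ m"
proof -
  let ?W = "{0..int (m*Q)}"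
  have "LL Q m (int (m*Q) + 1 - \<theta>) = (\<Sum>t\<in>?W. if t < int (m*Q) + 1 - \<theta> then bb Q m t else 0)"
    by (rule LL_window)
  also have "\<dots> = (\<Sum>t\<in>?W. if int (m*Q) - t < int (m*Q) + 1 - \<theta> then bb Q m (int (m*Q) - t) else 0)"
    by (rule sum.reindex_bij_witness[of _ "\<lambda>t. int (m*Q) - t" "\<lambda>t. int (m*Q) - t"]) auto
  also have "\<dots> = (\<Sum>t\<in>?W. if \<theta> \<le> t then bb Q m t else 0)"
  proof (rule sum.cong)
    fix t assume "t \<in> ?W"
    have "bb Q m (int (m*Q) - t) = bb Q m t" by (rule bb_sym[symmetric])
    then show "(if int (m*Q) - t < int (m*Q) + 1 - \<theta> then bb Q m (int (m*Q) - t) else 0) = (if \<theta> \<le> t then bb Q m t else 0)"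
      by simp
  qed simp
  finally have "LL Q m \<theta> + LL Q m (int (m*Q) + 1 - \<theta>) =
      (\<Sum>t\<in>?W. (if t < \<theta> then bb Q m t else 0) + (if \<theta> \<le> t then bb Q m t else 0))"
    unfolding LL_window[of Q m \<theta>] by (simp add: sum.distrib)
  also have "\<dots> = (\<Sum>t\<in>?W. bb Q m t)" by (rule sum.cong) auto
  finally show ?thesis using bb_total by simp
qed

lemma LL_diff: "y \<le> x \<Longrightarrow> LL Q m x - LL Q m y = (\<Sum>t\<in>{0..int (m*Q)}. if y \<le> t \<and> t < x then bb Q m t else 0)"
  unfolding LL_window by (simp add: sum_subtractf[symmetric]) (rule sum.cong, auto)

lemma LL_two:
  assumes "\<theta> + int Q > 0"
  shows "bb Q p (\<theta> + int Q) = (\<Sum>m<p. LL Q m (\<theta> + int Q) - LL Q m \<theta>)"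
proof (induction p)
  case 0
  then show ?case using assms by simp
next
  case (Suc p)
  have "bb Q (Suc p) (\<theta> + int Q) = (\<Sum>a\<le>Q. bb Q p (\<theta> + int Q - int a))" by simp
  also have "\<dots> = bb Q p (\<theta> + int Q) + (\<Sum>a\<in>{1..Q}. bb Q p (\<theta> + int Q - int a))"
  proof -
    have "{..Q} = insert 0 {1..Q}" by auto
    then show ?thesis by simp
  qed
  also have "(\<Sum>a\<in>{1..Q}. bb Q p (\<theta> + int Q - int a)) = (\<Sum>t\<in>{\<theta>..<\<theta> + int Q}. bb Q p t)"
    by (rule sum.reindex_bij_witness[of _ "\<lambda>t. nat (\<theta> + int Q - t)" "\<lambda>a. \<theta> + int Q - int a"]) auto
  also have "\<dots> = LL Q p (\<theta> + int Q) - LL Q p \<theta>"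
    by (subst LL_diff) (auto simp: bb_window intro!: sum.cong)
  finally show ?case using Suc.IH by simp
qed

definition GG :: "nat \<Rightarrow> int \<Rightarrow> nat \<Rightarrow> int \<Rightarrow> bool" where
  "GG Q h n j \<longleftrightarrow> (\<Sum>m\<le>n. int (Suc Q) ^ m - LL Q m ((int n - j) * h)) = (\<Sum>m\<le>n. LL Q m ((int n + j) * h))"

lemma GG_flip: "GG Q h n j \<longleftrightarrow> GG Q h n (- j)"
  unfolding GG_def by (simp add: sum_subtractf) (auto simp: algebra_simps)

lemma GG_step:
  assumes Qh: "int Q = 2 * h" and pos: "(int (Suc n) + j) * h > 0" and prev: "GG Q h n (j - 1)"
  shows "GG Q h (Suc n) j"
proof -
  let ?N = "Suc n"
  have e1: "int (Suc Q) ^ ?N - LL Q ?N ((int ?N - j) * h) = LL Q ?N ((int ?N + j) * h + 1)"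
    using LL_sym[of Q ?N "(int ?N - j) * h"] Qh
    by (simp add: algebra_simps)
  have e2: "LL Q ?N ((int ?N + j) * h + 1) = LL Q ?N ((int ?N + j) * h) + bb Q ?N ((int ?N + j) * h)"
    using pos by (intro LL_step) simp
  have e3: "bb Q ?N ((int ?N + j) * h) = (\<Sum>m<?N. LL Q m ((int ?N + j) * h) - LL Q m ((int n + (j - 1)) * h))"
  proof -
    have eq: "(int ?N + j) * h = (int n + (j - 1)) * h + int Q" using Qh by (simp add: algebra_simps)
    show ?thesis unfolding eq by (rule LL_two) (use pos eq in simp)
  qed
  have prev': "(\<Sum>m\<le>n. int (Suc Q) ^ m - LL Q m ((int ?N - j) * h)) = (\<Sum>m\<le>n. LL Q m ((int n + (j - 1)) * h))"
    using prev unfolding GG_def by (simp add: algebra_simps)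
  have "(\<Sum>m\<le>?N. int (Suc Q) ^ m - LL Q m ((int ?N - j) * h))
      = (\<Sum>m\<le>n. int (Suc Q) ^ m - LL Q m ((int ?N - j) * h)) + (int (Suc Q) ^ ?N - LL Q ?N ((int ?N - j) * h))"
    by simp
  also have "\<dots> = (\<Sum>m\<le>n. LL Q m ((int n + (j - 1)) * h)) + LL Q ?N ((int ?N + j) * h)
       + (\<Sum>m<?N. LL Q m ((int ?N + j) * h) - LL Q m ((int n + (j - 1)) * h))"
    unfolding prev' e1 e2 e3 by simp
  also have "\<dots> = (\<Sum>m\<le>?N. LL Q m ((int ?N + j) * h))"
    by (simp add: sum_subtractf lessThan_Suc_atMost)
  finally show ?thesis unfolding GG_def .
qed

lemma GG_all:
  assumes Qh: "int Q = 2 * h" and h1: "h \<ge> 1"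
  shows "GG Q h n (if even n then 1 else 0)"
proof (induction n)
  case 0
  have "LL Q 0 h = 1"
  proof -
    have "{0..<h} = insert 0 {1..<h}" using h1 by auto
    then show ?thesis unfolding LL_def by simp
  qed
  then show ?case unfolding GG_def using h1 by (simp add: LL_nonpos)
next
  case (Suc n)
  show ?case
  proof (cases "even n")
    case True
    then have "GG Q h n 1" using Suc.IH by simp
    then have "GG Q h n (0 - 1)" using GG_flip by simp
    then have "GG Q h (Suc n) 0" by (intro GG_step[OF Qh]) (use h1 in auto)
    then show ?thesis using True by simp
  next
    case False
    then have "GG Q h n (1 - 1)" using Suc.IH by simp
    then have "GG Q h (Suc n) 1" by (intro GG_step[OF Qh]) (use h1 in auto)
    then show ?thesis using False by simp
  qed
qed

lemma count_identity:
  assumes "int Q = 2 * h" "h \<ge> 1" "odd n"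
  shows "2 * (\<Sum>m\<le>n. LL Q m (int n * h)) = (\<Sum>m\<le>n. int (Suc Q) ^ m)"
proof -
  have "GG Q h n 0" using GG_all[OF assms(1,2), of n] assms(3) by simp
  then show ?thesis unfolding GG_def by (simp add: sum_subtractf)
qed



primrec aff :: "(nat \<Rightarrow> 'a::field) \<Rightarrow> nat \<Rightarrow> nat \<Rightarrow> nat \<Rightarrow> nat \<Rightarrow> (nat \<Rightarrow> 'a) set" where
  "aff \<alpha> Q j 0 r = {delta j}"
| "aff \<alpha> Q j (Suc d) r = (\<Union>s\<in>{..min r Q}. (\<lambda>p. p(j + Suc d := \<alpha> s)) ` aff \<alpha> Q j d (r - s))"

lemma aff_shape:
  "p \<in> aff \<alpha> Q j d r \<Longrightarrow> p j = 1 \<and> (\<forall>i<j. p i = 0) \<and> (\<forall>i>j + d. p i = 0)"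
proof (induction d arbitrary: r p)
  case 0
  then show ?case by (auto simp: delta_def)
next
  case (Suc d)
  then obtain s p' where s: "s \<le> min r Q" and p': "p' \<in> aff \<alpha> Q j d (r - s)" and p: "p = p'(j + Suc d := \<alpha> s)"
    by auto
  from Suc.IH[OF p'] show ?case unfolding p by auto
qed

lemma finite_aff: "finite (aff \<alpha> Q j d r)"
  by (induction d arbitrary: r) auto

lemma LL0: "0 < \<theta> \<Longrightarrow> LL Q 0 \<theta> = 1"
proof -
  assume "0 < \<theta>"
  then have "{0..<\<theta>} = insert 0 {1..<\<theta>}" by auto
  then show ?thesis unfolding LL_def by simp
qed

lemma card_aff:
  assumes inj: "inj_on \<alpha> {..Q}"
  shows "int (card (aff \<alpha> Q j d r)) = LL Q d (int r + 1)"
proof (induction d arbitrary: r)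
  case 0
  then show ?case by (simp add: LL0)
next
  case (Suc d)
  let ?m = "j + Suc d"
  let ?A = "\<lambda>s. (\<lambda>p. p(?m := \<alpha> s)) ` aff \<alpha> Q j d (r - s)"
  have injs: "inj_on (\<lambda>p. p(?m := \<alpha> s)) (aff \<alpha> Q j d (r - s))" for s
  proof (rule inj_onI)
    fix p p' assume "p \<in> aff \<alpha> Q j d (r - s)" "p' \<in> aff \<alpha> Q j d (r - s)" "p(?m := \<alpha> s) = p'(?m := \<alpha> s)"
    moreover have "p ?m = 0" using aff_shape[OF calculation(1)] by simp
    moreover have "p' ?m = 0" using aff_shape[OF calculation(2)] by simp
    ultimately show "p = p'" by (metis fun_upd_triv fun_upd_upd)
  qed
  have disj: "?A s \<inter> ?A s' = {}" if "s \<in> {..min r Q}" "s' \<in> {..min r Q}" "s \<noteq> s'" for s s'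
  proof -
    have "\<alpha> s \<noteq> \<alpha> s'" using inj that by (auto dest: inj_onD)
    then show ?thesis by (auto simp: fun_eq_iff) (metis fun_upd_same)
  qed
  have "card (aff \<alpha> Q j (Suc d) r) = (\<Sum>s\<le>min r Q. card (?A s))"
    unfolding aff.simps by (rule card_UN_disjoint) (use disj in \<open>auto intro: finite_imageI finite_aff\<close>)
  also have "\<dots> = (\<Sum>s\<le>min r Q. card (aff \<alpha> Q j d (r - s)))"
    by (intro sum.cong refl card_image injs)
  finally have "int (card (aff \<alpha> Q j (Suc d) r)) = (\<Sum>s\<le>min r Q. LL Q d (int (r - s) + 1))"
    using Suc.IH by simp
  also have "\<dots> = (\<Sum>s\<le>min r Q. LL Q d (int r + 1 - int s))"
    by (rule sum.cong) (auto simp: of_nat_diff intro!: arg_cong[where f="LL Q d"])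
  also have "\<dots> = (\<Sum>s\<le>Q. LL Q d (int r + 1 - int s))"
    by (rule sum.mono_neutral_left) (auto intro!: LL_nonpos)
  also have "\<dots> = LL Q (Suc d) (int r + 1)" by (simp add: LL_Suc)
  finally show ?case .
qed

lemma hp_pow_var: "i \<le> n \<Longrightarrow> (\<lambda>x::nat \<Rightarrow> 'a::field. x i ^ r) \<in> HP n r"
  using hp_prod[of r "\<lambda>u x. x i" n] hp_var[of i n] by simp

lemma aff_interp:
  fixes \<alpha> :: "nat \<Rightarrow> 'a::field"
  assumes inj: "inj_on \<alpha> {..Q}"
  shows "\<exists>G\<in>HP (j + d) r. \<forall>p\<in>aff \<alpha> Q j d r. G p = t p"
proof (induction d arbitrary: r t)
  case 0
  let ?G = "\<lambda>x::nat \<Rightarrow> 'a. t (delta j) * x j ^ r"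
  have "?G \<in> HP (j + 0) r" by (rule hp_scale) (rule hp_pow_var, simp)
  moreover have "\<forall>p\<in>aff \<alpha> Q j 0 r. ?G p = t p" by (simp add: delta_def)
  ultimately show ?case by (intro bexI[where x="?G"]) auto
next
  case (Suc d)
  let ?m = "j + d" and ?m' = "j + Suc d"
  note IHd = Suc.IH
  have claim: "\<exists>G\<in>HP ?m' r. \<forall>s<R. \<forall>p\<in>aff \<alpha> Q j d (r - s). G (p(?m' := \<alpha> s)) = t (p(?m' := \<alpha> s))"
    if "R \<le> Suc (min r Q)" for R
    using that
  proof (induction R)
    case 0
    show ?case using hp_zero by blast
  next
    case (Suc R)
    then have RrQ: "R \<le> r" "R \<le> Q" by auto
    have "R \<le> Suc (min r Q)" using Suc.prems by (auto simp: min_def)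
    then obtain GR where GR: "GR \<in> HP ?m' r" "\<forall>s<R. \<forall>p\<in>aff \<alpha> Q j d (r - s). GR (p(?m' := \<alpha> s)) = t (p(?m' := \<alpha> s))"
      using Suc.IH by blast
    define M where "M = (\<lambda>x::nat \<Rightarrow> 'a. \<Prod>u<R. (x ?m' - \<alpha> u * x j))"
    have MHP: "M \<in> HP ?m' R"
      unfolding M_def
      by (rule hp_prod) (intro hp_diff hp_scale hp_var, auto)
    define c where "c = (\<Prod>u<R. (\<alpha> R - \<alpha> u))"
    have c0: "c \<noteq> 0" unfolding c_def using inj RrQ by (auto dest: inj_onD)
    obtain g where g: "g \<in> HP ?m (r - R)"
      "\<forall>p\<in>aff \<alpha> Q j d (r - R). g p = (t (p(?m' := \<alpha> R)) - GR (p(?m' := \<alpha> R))) / c"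
      using IHd[of "r - R" "\<lambda>p. (t (p(?m' := \<alpha> R)) - GR (p(?m' := \<alpha> R))) / c"] by blast
    have g': "g \<in> HP ?m' (r - R)" by (rule hp_lift[OF _ g(1)]) simp
    define G where "G = (\<lambda>x. GR x + M x * g x)"
    have "(\<lambda>x. M x * g x) \<in> HP ?m' (R + (r - R))" by (rule hp_mult[OF MHP g'])
    then have "(\<lambda>x. M x * g x) \<in> HP ?m' r" using RrQ by simp
    then have GHP: "G \<in> HP ?m' r" unfolding G_def by (rule hp_add[OF GR(1)])
    have Mval: "M (p(?m' := \<alpha> s)) = (\<Prod>u<R. (\<alpha> s - \<alpha> u))" if "p \<in> aff \<alpha> Q j d r'" for p s r'
      using aff_shape[OF that] unfolding M_def by simp
    have "\<forall>s<Suc R. \<forall>p\<in>aff \<alpha> Q j d (r - s). G (p(?m' := \<alpha> s)) = t (p(?m' := \<alpha> s))"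
    proof (intro allI impI ballI)
      fix s p assume s: "s < Suc R" and p: "p \<in> aff \<alpha> Q j d (r - s)"
      show "G (p(?m' := \<alpha> s)) = t (p(?m' := \<alpha> s))"
      proof (cases "s < R")
        case True
        have "M (p(?m' := \<alpha> s)) = 0" unfolding Mval[OF p] using True by (auto intro: prod_zero)
        then show ?thesis unfolding G_def using GR(2) True p by simp
      next
        case False
        then have sR: "s = R" using s by simp
        have "g (p(?m' := \<alpha> s)) = g p" by (rule hp_local[OF g(1)]) simp
        then have "g (p(?m' := \<alpha> s)) = (t (p(?m' := \<alpha> R)) - GR (p(?m' := \<alpha> R))) / c"
          using g(2) p sR by simp
        moreover have "M (p(?m' := \<alpha> s)) = c" unfolding Mval[OF p] c_def sR ..
        ultimately show ?thesis unfolding G_def using c0 sR by simp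
      qed
    qed
    then show ?case using GHP by blast
  qed
  obtain G where G: "G \<in> HP ?m' r" "\<forall>s<Suc (min r Q). \<forall>p\<in>aff \<alpha> Q j d (r - s). G (p(?m' := \<alpha> s)) = t (p(?m' := \<alpha> s))"
    using claim[of "Suc (min r Q)"] by blast
  have "\<forall>p\<in>aff \<alpha> Q j (Suc d) r. G p = t p"
    using G(2) by (auto simp: less_Suc_eq_le)
  then show ?case using G(1) by blast
qed



definition SS :: "(nat \<Rightarrow> 'a::field) \<Rightarrow> nat \<Rightarrow> nat \<Rightarrow> nat \<Rightarrow> (nat \<Rightarrow> 'a) set" where
  "SS \<alpha> Q n k = (\<Union>j\<le>n. aff \<alpha> Q j (n - j) (k - 1))"

lemma SS_interp:
  fixes \<alpha> :: "nat \<Rightarrow> 'a::field"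
  assumes inj: "inj_on \<alpha> {..Q}" and k1: "1 \<le> k"
  shows "\<exists>F\<in>HP n k. \<forall>p\<in>SS \<alpha> Q n k. F p = t p"
proof -
  have "\<forall>t. \<exists>F\<in>HP n k. \<forall>p\<in>(\<Union>j'\<in>{j..n}. aff \<alpha> Q j' (n - j') (k - 1)). F p = t p" if "j \<le> Suc n" for j
    using that
  proof (induction j rule: inc_induct)
    case base
    show ?case using hp_zero by auto
  next
    case (step j)
    show ?case
    proof
      fix t :: "(nat \<Rightarrow> 'a) \<Rightarrow> 'a"
      obtain H where H: "H \<in> HP n k" "\<forall>p\<in>(\<Union>j'\<in>{Suc j..n}. aff \<alpha> Q j' (n - j') (k - 1)). H p = t p"
        using step.IH by blast
      obtain G where G: "G \<in> HP (j + (n - j)) (k - 1)" "\<forall>p\<in>aff \<alpha> Q j (n - j) (k - 1). G p = t p - H p"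
        using aff_interp[OF inj, of j "n - j" "k - 1" "\<lambda>p. t p - H p"] by blast
      have G': "G \<in> HP n (k - 1)" using G(1) step.hyps by simp
      define F where "F = (\<lambda>x. x j * G x + H x)"
      have "(\<lambda>x. x j * G x) \<in> HP n (1 + (k - 1))" by (rule hp_mult[OF hp_var G']) (use step.hyps in simp)
      then have "(\<lambda>x. x j * G x) \<in> HP n k" using k1 by simp
      then have FHP: "F \<in> HP n k" unfolding F_def by (rule hp_add[OF _ H(1)])
      have "\<forall>p\<in>(\<Union>j'\<in>{j..n}. aff \<alpha> Q j' (n - j') (k - 1)). F p = t p"
      proof
        fix p assume "p \<in> (\<Union>j'\<in>{j..n}. aff \<alpha> Q j' (n - j') (k - 1))"
        then obtain j' where j': "j' \<in> {j..n}" "p \<in> aff \<alpha> Q j' (n - j') (k - 1)" by blast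
        show "F p = t p"
        proof (cases "j' = j")
          case True
          then have "p j = 1" using aff_shape[OF j'(2)] by simp
          then show ?thesis unfolding F_def using G(2) j'(2) True by simp
        next
          case False
          then have "j' \<in> {Suc j..n}" using j'(1) by auto
          moreover have "p j = 0" using aff_shape[OF j'(2)] False j'(1) by auto
          ultimately show ?thesis unfolding F_def using H(2) j'(2) by auto
        qed
      qed
      then show "\<exists>F\<in>HP n k. \<forall>p\<in>(\<Union>j'\<in>{j..n}. aff \<alpha> Q j' (n - j') (k - 1)). F p = t p"
        using FHP by blast
    qed
  qed
  from this[of 0] show ?thesis unfolding SS_def by (simp add: atLeast0AtMost)
qed

lemma SS_sub: "SS \<alpha> Q n k \<subseteq> proj_points n"
proof
  fix p assume "p \<in> SS \<alpha> Q n k"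
  then obtain j where j: "j \<le> n" "p \<in> aff \<alpha> Q j (n - j) (k - 1)" unfolding SS_def by blast
  from aff_shape[OF j(2)] j(1) show "p \<in> proj_points n"
    unfolding proj_points_def by auto
qed

lemma card_SS:
  assumes inj: "inj_on \<alpha> {..Q}"
  shows "int (card (SS \<alpha> Q n k)) = (\<Sum>d\<le>n. LL Q d (int (k - 1) + 1))"
proof -
  have disj: "aff \<alpha> Q j (n - j) (k - 1) \<inter> aff \<alpha> Q j' (n - j') (k - 1) = {}" if "j \<noteq> j'" for j j'
  proof -
    have "p j = 1" "p j' = 1" if "p \<in> aff \<alpha> Q j (n - j) (k - 1)" "p \<in> aff \<alpha> Q j' (n - j') (k - 1)" for p
      using aff_shape[OF that(1)] aff_shape[OF that(2)] by auto
    moreover have "p j = 0 \<or> p j' = 0" if "p \<in> aff \<alpha> Q j (n - j) (k - 1)" "p \<in> aff \<alpha> Q j' (n - j') (k - 1)" for p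
      using aff_shape[OF that(1)] aff_shape[OF that(2)] \<open>j \<noteq> j'\<close> by (cases "j < j'") auto
    ultimately show ?thesis by fastforce
  qed
  have "card (SS \<alpha> Q n k) = (\<Sum>j\<le>n. card (aff \<alpha> Q j (n - j) (k - 1)))"
    unfolding SS_def by (rule card_UN_disjoint) (use disj finite_aff in auto)
  then have "int (card (SS \<alpha> Q n k)) = (\<Sum>j\<le>n. LL Q (n - j) (int (k - 1) + 1))"
    by (simp add: card_aff[OF inj])
  also have "\<dots> = (\<Sum>j<Suc n. LL Q (Suc n - Suc j) (int (k - 1) + 1))"
    by (simp add: lessThan_Suc_atMost)
  also have "\<dots> = (\<Sum>d<Suc n. LL Q d (int (k - 1) + 1))"
    by (rule sum.nat_diff_reindex)
  finally show ?thesis by (simp add: lessThan_Suc_atMost)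
qed

lemma card_pp: "card (proj_points n :: (nat \<Rightarrow> 'a::{finite,field}) set) = (\<Sum>d\<le>n. card (UNIV::'a set) ^ d)"
proof (induction n)
  case 0
  then show ?case by (simp add: pp_0)
next
  case (Suc n)
  have "card (proj_points (Suc n) :: (nat \<Rightarrow> 'a) set) = (\<Sum>P\<in>(proj_points (Suc n) :: (nat \<Rightarrow> 'a) set). (1::nat))" by simp
  also have "\<dots> = (\<Sum>p\<in>(proj_points n :: (nat \<Rightarrow> 'a) set). \<Sum>a\<in>(UNIV::'a set). 1) + 1"
    by (rule sum_pp_Suc)
  also have "\<dots> = card (proj_points n :: (nat \<Rightarrow> 'a) set) * card (UNIV::'a set) + 1" by simp
  also have "\<dots> = (\<Sum>d\<le>n. card (UNIV::'a set) ^ d) * card (UNIV::'a set) + 1" using Suc.IH by simp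
  also have "\<dots> = (\<Sum>d\<le>Suc n. card (UNIV::'a set) ^ d)"
    unfolding sum.atMost_Suc_shift by (simp add: sum_distrib_right power_Suc2 del: power_Suc sum.atMost_Suc)
  finally show ?case .
qed

lemma finite_ambient: "finite (ambient n :: ((nat \<Rightarrow> 'a::{finite,field}) \<Rightarrow> 'a) set)"
proof -
  let ?P = "proj_points n :: (nat \<Rightarrow> 'a) set"
  have "inj_on (\<lambda>v. restrict v ?P) (ambient n)"
  proof (rule inj_onI)
    fix v w assume "v \<in> ambient n" "w \<in> ambient n" "restrict v ?P = restrict w ?P"
    then show "v = w" unfolding ambient_def by (auto simp: fun_eq_iff restrict_def) (metis)
  qed
  moreover have "(\<lambda>v. restrict v ?P) ` ambient n \<subseteq> PiE ?P (\<lambda>_. UNIV)" by auto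
  moreover have "finite (PiE ?P (\<lambda>_. UNIV :: 'a set))" by (intro finite_PiE finite_proj_points) simp
  ultimately show ?thesis by (metis finite_imageD finite_subset)
qed

lemma card_PiE_U: "finite A \<Longrightarrow> card (PiE A (\<lambda>_. UNIV :: 'a::finite set)) = card (UNIV::'a set) ^ card A"
  by (simp add: card_PiE)

lemma count_dual:
  fixes C :: "((nat \<Rightarrow> 'a::{finite,field}) \<Rightarrow> 'a) set" and S :: "(nat \<Rightarrow> 'a) set"
  assumes CC: "C = proj_RM n k" and sub: "C \<subseteq> dual_code n C"
    and Ssub: "S \<subseteq> proj_points n"
    and interp: "\<And>t. \<exists>F\<in>HP n k. \<forall>p\<in>S. F p = t p"
    and half: "2 * card S = card (proj_points n :: (nat \<Rightarrow> 'a) set)"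
  shows "C = dual_code n C"
proof -
  let ?P = "proj_points n :: (nat \<Rightarrow> 'a) set"
  let ?q = "card (UNIV :: 'a set)"
  let ?D = "dual_code n C"
  have finP: "finite ?P" by (rule finite_proj_points)
  have finS: "finite S" using finite_subset[OF Ssub finP] .
  have finD: "finite ?D" using finite_ambient[of n, where 'a='a] unfolding dual_code_def by (auto intro: finite_subset)
  have finC: "finite C" using finite_subset[OF sub finD] .
  have c1: "?q ^ card S \<le> card C"
  proof -
    have "PiE S (\<lambda>_. UNIV) \<subseteq> (\<lambda>v. restrict v S) ` C"
    proof
      fix t :: "(nat \<Rightarrow> 'a) \<Rightarrow> 'a" assume t: "t \<in> PiE S (\<lambda>_. UNIV)"
      obtain F where F: "F \<in> HP n k" "\<forall>p\<in>S. F p = t p" using interp by blast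
      have "vecF n F \<in> C" using CC vecF_in_RM[OF F(1)] by simp
      moreover have "restrict (vecF n F) S = t"
      proof
        fix x show "restrict (vecF n F) S x = t x"
          using t F(2) Ssub by (cases "x \<in> S") (auto simp: vecF_def restrict_def PiE_def extensional_def)
      qed
      ultimately show "t \<in> (\<lambda>v. restrict v S) ` C" by (metis image_eqI)
    qed
    then have "card (PiE S (\<lambda>_. UNIV :: 'a set)) \<le> card ((\<lambda>v. restrict v S) ` C)"
      by (intro card_mono finite_imageI finC)
    also have "\<dots> \<le> card C" by (rule card_image_le[OF finC])
    finally show ?thesis using card_PiE_U[OF finS, where 'a='a] by simp
  qed
  have c2: "card ?D \<le> ?q ^ card (?P - S)"
  proof -
    have "inj_on (\<lambda>v. restrict v (?P - S)) ?D"
    proof (rule inj_onI)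
      fix v w assume v: "v \<in> ?D" and w: "w \<in> ?D" and e: "restrict v (?P - S) = restrict w (?P - S)"
      show "v = w"
      proof
        fix P
        show "v P = w P"
        proof (cases "P \<in> ?P")
          case False
          then show ?thesis using v w unfolding dual_code_def ambient_def by auto
        next
          case PP: True
          show ?thesis
          proof (cases "P \<in> S")
            case False
            then show ?thesis using e PP by (metis DiffI restrict_apply')
          next
            case True
            obtain F where F: "F \<in> HP n k" "\<forall>p\<in>S. F p = (if p = P then 1 else 0)"
              using interp[of "\<lambda>p. if p = P then 1 else 0"] by blast
            have cC: "vecF n F \<in> C" using CC vecF_in_RM[OF F(1)] by simp
            have d0: "dot n v (vecF n F) - dot n w (vecF n F) = 0"
              using v w cC unfolding dual_code_def by auto
            have "dot n v (vecF n F) - dot n w (vecF n F) = (\<Sum>p\<in>?P. (v p - w p) * F p)"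
              unfolding dot_def vecF_def by (simp add: sum_subtractf[symmetric] algebra_simps)
            also have "\<dots> = (\<Sum>p\<in>?P. if p = P then v p - w p else 0)"
            proof (rule sum.cong)
              fix p assume pP: "p \<in> ?P"
              show "(v p - w p) * F p = (if p = P then v p - w p else 0)"
              proof (cases "p \<in> S")
                case True then show ?thesis using F(2) by auto
              next
                case False
                then have "v p = w p" using e pP by (metis DiffI restrict_apply')
                then show ?thesis using False True by auto
              qed
            qed simp
            also have "\<dots> = v P - w P" using PP finP by simp
            finally show ?thesis using d0 by simp
          qed
        qed
      qed
    qed
    moreover have "(\<lambda>v. restrict v (?P - S)) ` ?D \<subseteq> PiE (?P - S) (\<lambda>_. UNIV)"
      by (intro image_subsetI) (rule restrict_PiE_iff[THEN iffD2], simp)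
    ultimately have "card ?D \<le> card (PiE (?P - S) (\<lambda>_. UNIV :: 'a set))"
      by (intro card_inj_on_le) (auto intro!: finite_PiE simp: finP)
    then show ?thesis using card_PiE_U[of "?P - S", where 'a='a] finP by simp
  qed
  have "card (?P - S) = card S" using card_Diff_subset[OF finS Ssub] half by simp
  then have "card ?D \<le> card C" using c1 c2 by simp
  moreover have "card C \<le> card ?D" by (rule card_mono[OF finD sub])
  ultimately show ?thesis using card_subset_eq[OF finD sub] by simp
qed

lemma if_dir:
  fixes n k :: nat
    and C :: "((nat \<Rightarrow> 'a::{finite,field}) \<Rightarrow> 'a) set"
  assumes CC: "C = proj_RM n k"
    and n1: "n \<ge> 1" and k1: "1 \<le> k"
    and oq: "odd (card (UNIV :: 'a set))" and on: "odd n"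
    and kk: "k = n * (card (UNIV :: 'a set) - 1) div 2"
  shows "C = dual_code n C"
proof -
  define q where "q = card (UNIV :: 'a set)"
  define Q where "Q = q - 1"
  have q2: "q \<ge> 2" unfolding q_def by (rule card_ge2)
  have evQ: "even Q" using oq q2 unfolding Q_def q_def by auto
  define h where "h = Q div 2"
  have Qh: "Q = 2 * h" unfolding h_def using evQ by simp
  have h1: "h \<ge> 1" using q2 oq Qh unfolding Q_def q_def by (cases "card (UNIV::'a set)") auto
  have knh: "k = n * h" using kk Qh unfolding Q_def q_def by simp
  have sub: "C \<subseteq> dual_code n C"
  proof
    fix v assume vC: "v \<in> C"
    obtain F where F: "F \<in> HP n k" "v = vecF n F" using vC CC RM_elem by blast
    have "dot n v c = 0" if cC: "c \<in> C" for c
    proof -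
      obtain G where G: "G \<in> HP n k" "c = vecF n G" using cC CC RM_elem by blast
      have pr: "(\<lambda>x. F x * G x) \<in> HP n (k + k)" by (rule hp_mult[OF F(1) G(1)])
      have "dot n v c = (\<Sum>P\<in>proj_points n. F P * G P)" unfolding F(2) G(2) dot_vecF ..
      also have "\<dots> = 0"
      proof (rule orth_HP[OF pr])
        have kk2: "k + k = n * (card (UNIV::'a set) - 1)" using knh Qh unfolding Q_def q_def by simp
        show "card (UNIV::'a set) - 1 dvd k + k" unfolding kk2 by simp
        show "0 < k + k" using k1 by simp
        show "k + k \<le> n * (card (UNIV::'a set) - 1)" using knh Qh unfolding Q_def q_def by simp
      qed
      finally show ?thesis .
    qed
    then show "v \<in> dual_code n C" unfolding dual_code_def using F(2) vecF_ambient by auto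
  qed
  obtain \<alpha> :: "nat \<Rightarrow> 'a" where bij: "bij_betw \<alpha> {0..<q} UNIV"
    using ex_bij_betw_nat_finite[of "UNIV::'a set"] unfolding q_def by auto
  have inj: "inj_on \<alpha> {..Q}"
  proof -
    have "{..Q} \<subseteq> {0..<q}" unfolding Q_def using q2 by auto
    then show ?thesis using bij unfolding bij_betw_def by (auto intro: inj_on_subset)
  qed
  let ?S = "SS \<alpha> Q n k"
  have "int (card ?S) = (\<Sum>d\<le>n. LL Q d (int n * int h))"
    unfolding card_SS[OF inj] using k1 knh by simp
  then have "2 * int (card ?S) = (\<Sum>d\<le>n. int (Suc Q) ^ d)"
    using count_identity[of Q "int h" n] Qh h1 on by simp
  also have "\<dots> = int (card (proj_points n :: (nat \<Rightarrow> 'a) set))"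
    unfolding card_pp using q2 unfolding Q_def q_def by simp
  finally have half: "2 * card ?S = card (proj_points n :: (nat \<Rightarrow> 'a) set)" by linarith
  show ?thesis
    by (rule count_dual[OF CC sub SS_sub SS_interp[OF inj k1] half])
qed

theorem mainTheorem4:
  fixes n k :: nat
    and C :: "((nat \<Rightarrow> 'a::{finite,field}) \<Rightarrow> 'a) set"
  assumes "C = proj_RM n k"
    and "n \<ge> 1" and "1 \<le> k" and "k \<le> n * (card (UNIV :: 'a set) - 1)"
  shows "C = dual_code n C
     \<longleftrightarrow> odd (card (UNIV :: 'a set)) \<and> odd n \<and> k = n * (card (UNIV :: 'a set) - 1) div 2"
  using only_if_dir[OF assms] if_dir[OF assms(1,2,3)] by blast

end
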